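(* The semigroup $\mathbb NA$ is scored if and only if $\mathbb C[S_1]$ is a simple $\mathbb Z^d$-graded $D(R_A)$-module (it has no nonzero proper $\mathbb Z^d$-graded $D(R_A)$-submodules).
   Context: $A\subset\mathbb Z^d$ is a finite set generating the group $\mathbb Z^d$; $R_A=\mathbb C[\mathbb NA]\subseteq\mathbb C[t_1^{\pm1},\dots,t_d^{\pm1}]$; $D(R_A)=\{P\in\mathbb C[t^{\pm1}]\langle\partial_1,\dots,\partial_d\rangle:P(R_A)\subseteq R_A\}$, which acts on Laurent polynomials. For a facet $\sigma$ of $\mathbb R_{\ge0}A$, $F_\sigma$ is the unique linear form with $F_\sigma(\mathbb R_{\ge0}A)\ge0$, $F_\sigma(\sigma)=0$, $F_\sigma(\mathbb Z^d)=\mathbb Z$. $S_1=\bigcap_{\sigma\text{ facet}}\{\mathbf a\in\mathbb Z^d:F_\sigma(\mathbf a)\in F_\sigma(\mathbb NA)\}$ (equivalently the set of $\mathbf a$ with $E_\sigma(\mathbf a)\neq\emptyset$ for all facets, where $E_\sigma(\mathbf a)=\{\boldsymbol\lambda\in\mathbb C(A\cap\sigma)/\mathbb Z(A\cap\sigma):\mathbf a-\boldsymbol\lambda\in\mathbb NA+\mathbb Z(A\cap\sigma)\}$), and $\mathbb C[S_1]=\bigoplus_{\mathbf a\in S_1}\mathbb Ct^{\mathbf a}$, a $\mathbb Z^d$-graded $D(R_A)$-submodule of $\mathbb C[t^{\pm1}]$. $\mathbb NA$ is scored if $\mathbb NA=S_1$. *)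

theory Defs
  imports "HOL-Analysis.Analysis"
begin

text \<open>Exponent lattice Z^d is modelled as int ^ 'd for a finite index type 'd (d = CARD('d)).\<close>

definition real_of_lattice :: "int ^ 'd \<Rightarrow> real ^ 'd" where
  "real_of_lattice a = (\<chi> i. real_of_int (a $ i))"

inductive_set semigroup_gen :: "(int ^ 'd) set \<Rightarrow> (int ^ 'd) set" for A where
  zero: "0 \<in> semigroup_gen A"
| add: "x \<in> semigroup_gen A \<Longrightarrow> a \<in> A \<Longrightarrow> x + a \<in> semigroup_gen A"

inductive_set group_gen :: "(int ^ 'd) set \<Rightarrow> (int ^ 'd) set" for A where
  zero: "0 \<in> group_gen A"
| gen: "a \<in> A \<Longrightarrow> a \<in> group_gen A"
| diff: "x \<in> group_gen A \<Longrightarrow> y \<in> group_gen A \<Longrightarrow> x - y \<in> group_gen A"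

definition real_cone :: "(int ^ 'd) set \<Rightarrow> (real ^ 'd) set" where
  "real_cone A = {x. \<exists>c. (\<forall>a\<in>A. c a \<ge> 0) \<and> x = (\<Sum>a\<in>A. c a *\<^sub>R real_of_lattice a)}"

text \<open>w is (the coefficient vector of) the primitive facet form F_sigma:
  F(x) = w . x, nonnegative on the cone, zero on sigma, F(Z^d) = Z.\<close>
definition is_facet_form :: "(int ^ 'd) set \<Rightarrow> (real ^ 'd) set \<Rightarrow> real ^ 'd \<Rightarrow> bool" where
  "is_facet_form A \<sigma> w \<longleftrightarrow>
     (\<forall>x\<in>real_cone A. w \<bullet> x \<ge> 0) \<and> (\<forall>x\<in>\<sigma>. w \<bullet> x = 0) \<and>
     (\<lambda>a. w \<bullet> real_of_lattice a) ` UNIV = \<int>"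

definition S1 :: "(int ^ 'd) set \<Rightarrow> (int ^ 'd) set" where
  "S1 A = {a. \<forall>\<sigma> w. \<sigma> facet_of real_cone A \<longrightarrow> is_facet_form A \<sigma> w \<longrightarrow>
              w \<bullet> real_of_lattice a \<in> (\<lambda>b. w \<bullet> real_of_lattice b) ` semigroup_gen A}"

text \<open>Laurent polynomials C[t^{+-1}]: finitely supported coefficient functions.\<close>
definition laurent :: "(int ^ 'd \<Rightarrow> complex) set" where
  "laurent = {f. finite {m. f m \<noteq> 0}}"

definition span_monomials :: "(int ^ 'd) set \<Rightarrow> (int ^ 'd \<Rightarrow> complex) set" where
  "span_monomials S = {f \<in> laurent. \<forall>m. f m \<noteq> 0 \<longrightarrow> m \<in> S}"

text \<open>Differential operators in C[t^{+-1}]<d_1,...,d_d>, in the normal form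
  P = sum of P(a,b) t^a d^b (finitely many nonzero coefficients).\<close>
definition diffops :: "((int ^ 'd) \<times> (nat ^ 'd) \<Rightarrow> complex) set" where
  "diffops = {P. finite {p. P p \<noteq> 0}}"

definition int_of_natvec :: "nat ^ 'd \<Rightarrow> int ^ 'd" where
  "int_of_natvec b = (\<chi> i. int (b $ i))"

text \<open>d^b t^m = ffact(m,b) t^(m-b), ffact(m,b) = prod_i m_i (m_i - 1) ... (m_i - b_i + 1).\<close>
definition ffact_vec :: "int ^ 'd \<Rightarrow> nat ^ 'd \<Rightarrow> complex" where
  "ffact_vec m b = (\<Prod>i\<in>UNIV. \<Prod>j<b $ i. of_int (m $ i - int j))"

definition act :: "((int ^ 'd) \<times> (nat ^ 'd) \<Rightarrow> complex) \<Rightarrow> (int ^ 'd \<Rightarrow> complex) \<Rightarrow> (int ^ 'd \<Rightarrow> complex)" where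
  "act P f = (\<lambda>n. \<Sum>p\<in>{p. P p \<noteq> 0}.
      P p * ffact_vec (n + int_of_natvec (snd p) - fst p) (snd p) *
            f (n + int_of_natvec (snd p) - fst p))"

definition DRA :: "(int ^ 'd) set \<Rightarrow> ((int ^ 'd) \<times> (nat ^ 'd) \<Rightarrow> complex) set" where
  "DRA A = {P \<in> diffops. \<forall>f \<in> span_monomials (semigroup_gen A).
                 act P f \<in> span_monomials (semigroup_gen A)}"

definition graded_submodule :: "(int ^ 'd) set \<Rightarrow> (int ^ 'd \<Rightarrow> complex) set \<Rightarrow> (int ^ 'd \<Rightarrow> complex) set \<Rightarrow> bool" where
  "graded_submodule A N M \<longleftrightarrow> N \<subseteq> M \<and> (\<lambda>_. 0) \<in> N \<and>
     (\<forall>f\<in>N. \<forall>g\<in>N. (\<lambda>m. f m + g m) \<in> N) \<and>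
     (\<forall>c. \<forall>f\<in>N. (\<lambda>m. c * f m) \<in> N) \<and>
     (\<forall>P\<in>DRA A. \<forall>f\<in>N. act P f \<in> N) \<and>
     (\<forall>f\<in>N. \<forall>a. (\<lambda>m. if m = a then f a else 0) \<in> N)"

definition simple_graded_module :: "(int ^ 'd) set \<Rightarrow> (int ^ 'd \<Rightarrow> complex) set \<Rightarrow> bool" where
  "simple_graded_module A M \<longleftrightarrow> M \<noteq> {\<lambda>_. 0} \<and>
     (\<forall>N. graded_submodule A N M \<longrightarrow> N = {\<lambda>_. 0} \<or> N = M)"

end

theory Submission
  imports Defs
begin

lemma rl_add: "real_of_lattice (x + y) = real_of_lattice x + real_of_lattice y"
  by (simp add: real_of_lattice_def vec_eq_iff)
lemma rl_diff: "real_of_lattice (x - y) = real_of_lattice x - real_of_lattice y"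
  by (simp add: real_of_lattice_def vec_eq_iff)
lemma rl_0: "real_of_lattice 0 = 0"
  by (simp add: real_of_lattice_def vec_eq_iff)

lemma sg_add: "y \<in> semigroup_gen A \<Longrightarrow> x \<in> semigroup_gen A \<Longrightarrow> x + y \<in> semigroup_gen A"
proof (induction y rule: semigroup_gen.induct)
  case zero then show ?case by simp
next
  case (add y a)
  then have "(x + y) + a \<in> semigroup_gen A" using semigroup_gen.add[of "x+y" A a] by simp
  then show ?case by (simp add: add.assoc)
qed

lemma gg_diff: "z \<in> group_gen A \<Longrightarrow> \<exists>x\<in>semigroup_gen A. \<exists>y\<in>semigroup_gen A. z = x - y"
proof (induction z rule: group_gen.induct)
  case zero then show ?case using semigroup_gen.zero by force
next
  case (gen a)
  have "0 + a \<in> semigroup_gen A" by (rule semigroup_gen.add[OF semigroup_gen.zero gen])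
  then show ?case using semigroup_gen.zero by force
next
  case (diff x y)
  then obtain x1 y1 x2 y2 where h: "x1\<in>semigroup_gen A" "y1\<in>semigroup_gen A" "x = x1 - y1"
     "x2\<in>semigroup_gen A" "y2\<in>semigroup_gen A" "y = x2 - y2" by blast
  have "x - y = (x1 + y2) - (y1 + x2)" using h by (simp add: algebra_simps)
  then show ?case using h sg_add by blast
qed

lemma rl_in_cone: "a \<in> A \<Longrightarrow> finite A \<Longrightarrow> real_of_lattice a \<in> real_cone A"
  unfolding real_cone_def
  by (rule CollectI, rule exI[of _ "\<lambda>b. if b = a then 1 else 0"]) (simp add: sum.delta' if_distrib[of "\<lambda>c. c *\<^sub>R _"] cong: if_cong)

lemma convex_cone_real_cone: "convex_cone (real_cone A)"
  unfolding convex_cone_iff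
proof (intro conjI ballI allI impI)
  show "0 \<in> real_cone A" unfolding real_cone_def by (auto intro!: exI[of _ "\<lambda>_. 0"])
next
  fix x y assume "x \<in> real_cone A" "y \<in> real_cone A"
  then obtain c d where "\<forall>a\<in>A. c a \<ge> 0" "x = (\<Sum>a\<in>A. c a *\<^sub>R real_of_lattice a)"
     "\<forall>a\<in>A. d a \<ge> 0" "y = (\<Sum>a\<in>A. d a *\<^sub>R real_of_lattice a)" unfolding real_cone_def by blast
  then show "x + y \<in> real_cone A" unfolding real_cone_def
    by (auto intro!: exI[of _ "\<lambda>a. c a + d a"] simp: scaleR_add_left sum.distrib)
next
  fix x and k :: real assume "x \<in> real_cone A" "0 \<le> k"
  then obtain c where "\<forall>a\<in>A. c a \<ge> 0" "x = (\<Sum>a\<in>A. c a *\<^sub>R real_of_lattice a)"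
    unfolding real_cone_def by blast
  then show "k *\<^sub>R x \<in> real_cone A" using \<open>0 \<le> k\<close> unfolding real_cone_def
    by (auto intro!: exI[of _ "\<lambda>a. k * c a"] simp: scaleR_sum_right)
qed

lemma real_cone_hull:
  assumes "finite A"
  shows "real_cone A = convex_cone hull (real_of_lattice ` A)"
proof
  show "convex_cone hull (real_of_lattice ` A) \<subseteq> real_cone A"
    by (rule hull_minimal) (use rl_in_cone assms convex_cone_real_cone in auto)
next
  have sum_in: "(\<Sum>a\<in>B. c a *\<^sub>R real_of_lattice a) \<in> convex_cone hull (real_of_lattice ` A)"
    if "finite B" "B \<subseteq> A" "\<forall>a\<in>A. c a \<ge> 0" for B c
    using that
  proof (induction B rule: finite_induct)
    case empty then show ?case by (simp add: convex_cone_hull_contains_0)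
  next
    case (insert b B)
    have "c b *\<^sub>R real_of_lattice b \<in> convex_cone hull (real_of_lattice ` A)"
      using insert by (intro convex_cone_hull_mul hull_inc) auto
    then show ?case using insert by (simp add: convex_cone_hull_add)
  qed
  show "real_cone A \<subseteq> convex_cone hull (real_of_lattice ` A)"
    unfolding real_cone_def using sum_in assms by blast
qed

lemma finite_facets: "finite A \<Longrightarrow> finite {\<sigma>. \<sigma> facet_of real_cone A}"
  by (simp add: real_cone_hull finite_polyhedron_facets polyhedron_convex_cone_hull)

lemma w_nonneg_sg:
  assumes "finite A" "\<forall>x\<in>real_cone A. w \<bullet> x \<ge> 0" "m \<in> semigroup_gen A"
  shows "w \<bullet> real_of_lattice m \<ge> 0"
  using assms(3)
proof (induction m rule: semigroup_gen.induct)
  case zero then show ?case by (simp add: rl_0)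
next
  case (add x a)
  then show ?case using assms rl_in_cone[of a A] by (simp add: rl_add inner_add_right)
qed

lemma span_A:
  assumes "group_gen A = UNIV"
  shows "span (real_of_lattice ` A) = UNIV"
proof -
  have "real_of_lattice z \<in> span (real_of_lattice ` A)" if "z \<in> group_gen A" for z
    using that
  proof (induction z rule: group_gen.induct)
    case zero then show ?case by (simp add: rl_0 span_zero)
  next
    case (gen a) then show ?case by (simp add: span_base)
  next
    case (diff x y) then show ?case by (simp add: rl_diff span_diff)
  qed
  then have zz: "real_of_lattice z \<in> span (real_of_lattice ` A)" for z using assms by auto
  have ax: "axis i 1 \<in> span (real_of_lattice ` A)" for i
  proof -
    have "axis i (1::real) = real_of_lattice (axis i 1)"
      by (simp add: real_of_lattice_def vec_eq_iff axis_def)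
    then show ?thesis using zz by simp
  qed
  have "x \<in> span (real_of_lattice ` A)" for x :: "real ^ 'a"
  proof -
    have "x = (\<Sum>i\<in>UNIV. x $ i *s axis i 1)" by (simp add: basis_expansion)
    also have "\<dots> = (\<Sum>i\<in>UNIV. x $ i *\<^sub>R axis i 1)" by (simp add: scalar_mult_eq_scaleR)
    also have "\<dots> \<in> span (real_of_lattice ` A)"
      by (intro span_sum span_mul ax)
    finally show ?thesis .
  qed
  then show ?thesis by auto
qed

lemma vanish_span:
  fixes w :: "'a::euclidean_space"
  assumes "\<forall>x\<in>T. w \<bullet> x = 0" "x \<in> span T"
  shows "w \<bullet> x = 0"
proof -
  have "span T \<subseteq> {x. w \<bullet> x = 0}"
    by (rule span_minimal) (use assms subspace_hyperplane in auto)
  then show ?thesis using assms by auto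
qed

lemma facet_form_unique:
  fixes A :: "(int ^ 'd) set"
  assumes fin: "finite A" and gg: "group_gen A = UNIV"
    and fac: "\<sigma> facet_of real_cone A"
    and f1: "is_facet_form A \<sigma> w1" and f2: "is_facet_form A \<sigma> w2"
  shows "w1 = w2"
proof -
  let ?S = "real_cone A"
  have cc: "convex_cone ?S" by (rule convex_cone_real_cone)
  have "real_of_lattice ` A \<subseteq> ?S" using rl_in_cone fin by blast
  then have "span ?S = UNIV" using span_A[OF gg] span_mono by blast
  then have dS: "dim ?S = DIM(real ^ 'd)" using dim_eq_full by blast
  have "0 \<in> ?S" using cc convex_cone_contains_0 by blast
  then have "aff_dim ?S = int (dim ?S)" by (intro aff_dim_zero hull_inc)
  with dS have adS: "aff_dim ?S = int DIM(real ^ 'd)" by simp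
  have sface: "\<sigma> face_of ?S" and sne: "\<sigma> \<noteq> {}" and adsig: "aff_dim \<sigma> = aff_dim ?S - 1"
    using fac unfolding facet_of_def by auto
  have sS: "\<sigma> \<subseteq> ?S" using sface face_of_imp_subset by blast
  have zs: "0 \<in> \<sigma>"
  proof -
    obtain x where x: "x \<in> \<sigma>" using sne by blast
    show ?thesis
    proof (cases "x = 0")
      case True then show ?thesis using x by simp
    next
      case False
      have "(2::real) *\<^sub>R x \<in> ?S" using convex_cone_scaleR[OF cc, of 2 x] x sS by auto
      moreover have "x \<in> open_segment 0 ((2::real) *\<^sub>R x)"
      proof -
        have "midpoint 0 ((2::real) *\<^sub>R x) = x" by (simp add: midpoint_def)
        moreover have "0 \<noteq> (2::real) *\<^sub>R x" using False by simp
        ultimately show ?thesis using midpoint_in_open_segment by metis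
      qed
      ultimately show ?thesis using face_ofD[OF sface _ \<open>0 \<in> ?S\<close> _ x] by blast
    qed
  qed
  have "aff_dim \<sigma> = int (dim \<sigma>)" using zs by (intro aff_dim_zero hull_inc)
  with adsig adS have dsig: "int (dim \<sigma>) = int DIM(real ^ 'd) - 1" by simp
  have img1: "(\<lambda>a. w1 \<bullet> real_of_lattice a) ` UNIV = \<int>" and nn1: "\<forall>x\<in>?S. w1 \<bullet> x \<ge> 0"
    and z1: "\<forall>x\<in>\<sigma>. w1 \<bullet> x = 0"
    using f1 unfolding is_facet_form_def by auto
  have img2: "(\<lambda>a. w2 \<bullet> real_of_lattice a) ` UNIV = \<int>" and nn2: "\<forall>x\<in>?S. w2 \<bullet> x \<ge> 0"
    and z2: "\<forall>x\<in>\<sigma>. w2 \<bullet> x = 0"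
    using f2 unfolding is_facet_form_def by auto
  obtain a0 where a0: "a0 \<in> A" "w1 \<bullet> real_of_lattice a0 \<noteq> 0"
  proof (rule ccontr)
    assume "\<not> thesis"
    then have "\<forall>x\<in>real_of_lattice ` A. w1 \<bullet> x = 0" using that by blast
    then have "w1 \<bullet> x = 0" for x using vanish_span[of "real_of_lattice ` A" w1 x] span_A[OF gg] by simp
    moreover obtain z where "w1 \<bullet> real_of_lattice z = 1"
      using img1 by (metis Ints_1 imageE)
    ultimately show False by simp
  qed
  define x0 where "x0 = real_of_lattice a0"
  have x0S: "x0 \<in> ?S" using a0 fin rl_in_cone x0_def by blast
  have "w1 \<bullet> x0 \<ge> 0" using nn1 x0S by blast
  moreover have "w1 \<bullet> x0 \<noteq> 0" using a0 by (simp add: x0_def)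
  ultimately have p1: "w1 \<bullet> x0 > 0" by linarith
  have "x0 \<notin> span \<sigma>"
  proof
    assume "x0 \<in> span \<sigma>"
    then have "w1 \<bullet> x0 = 0" by (rule vanish_span[OF z1])
    then show False using p1 by simp
  qed
  then have "dim (insert x0 \<sigma>) = dim \<sigma> + 1" by (simp add: dim_insert)
  with dsig have "dim (insert x0 \<sigma>) = DIM(real ^ 'd)" by simp
  then have spU: "span (insert x0 \<sigma>) = UNIV" using dim_eq_full by blast
  define v where "v = (w1 \<bullet> x0) *\<^sub>R w2 - (w2 \<bullet> x0) *\<^sub>R w1"
  have "v \<bullet> x0 = 0" by (simp add: v_def inner_diff_left)
  moreover have "v \<bullet> x = 0" if "x \<in> \<sigma>" for x using z1 z2 that by (simp add: v_def inner_diff_left)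
  ultimately have "\<forall>x\<in>insert x0 \<sigma>. v \<bullet> x = 0" by blast
  then have "v \<bullet> v = 0" using vanish_span spU by blast
  then have "v = 0" by simp
  define l where "l = (w2 \<bullet> x0) / (w1 \<bullet> x0)"
  have w2l: "w2 = l *\<^sub>R w1"
  proof -
    have "(w1 \<bullet> x0) *\<^sub>R w2 = (w2 \<bullet> x0) *\<^sub>R w1" using \<open>v = 0\<close> v_def by simp
    then have "(1 / (w1 \<bullet> x0)) *\<^sub>R ((w1 \<bullet> x0) *\<^sub>R w2) = (1 / (w1 \<bullet> x0)) *\<^sub>R ((w2 \<bullet> x0) *\<^sub>R w1)"
      by simp
    then show ?thesis using p1 by (simp add: l_def)
  qed
  have l0: "l \<ge> 0" using nn2 x0S p1 unfolding l_def by (simp add: divide_nonneg_pos)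
  obtain z1 where "w1 \<bullet> real_of_lattice z1 = 1" using img1 by (metis Ints_1 imageE)
  then have "l = w2 \<bullet> real_of_lattice z1" using w2l by simp
  then have lZ: "l \<in> \<int>" using img2 by blast
  obtain z2 where "w2 \<bullet> real_of_lattice z2 = 1" using img2 by (metis Ints_1 imageE)
  then have lk: "l * (w1 \<bullet> real_of_lattice z2) = 1" using w2l by simp
  have kZ: "w1 \<bullet> real_of_lattice z2 \<in> \<int>" using img1 by blast
  obtain li ki where "l = of_int li" "w1 \<bullet> real_of_lattice z2 = of_int ki"
    using lZ kZ by (metis Ints_cases)
  with lk have "li * ki = 1" by (metis of_int_eq_1_iff of_int_mult)
  then have "li = 1 \<or> li = -1" using zmult_eq_1_iff by blast
  with l0 \<open>l = of_int li\<close> have "l = 1" by auto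
  then show ?thesis using w2l by simp
qed

lemma finite_W:
  fixes A :: "(int ^ 'd) set"
  assumes fin: "finite A" and gg: "group_gen A = UNIV"
  shows "finite {w. \<exists>\<sigma>. \<sigma> facet_of real_cone A \<and> is_facet_form A \<sigma> w}"
proof -
  have eq: "{w. \<exists>\<sigma>. \<sigma> facet_of real_cone A \<and> is_facet_form A \<sigma> w}
      = (\<Union>\<sigma>\<in>{\<sigma>. \<sigma> facet_of real_cone A}. {w. is_facet_form A \<sigma> w})" by auto
  have "finite {w. is_facet_form A \<sigma> w}" if "\<sigma> facet_of real_cone A" for \<sigma>
  proof (cases "{w. is_facet_form A \<sigma> w} = {}")
    case True then show ?thesis by simp
  next
    case False
    then obtain w0 where "is_facet_form A \<sigma> w0" by blast
    then have "{w. is_facet_form A \<sigma> w} \<subseteq> {w0}"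
      using facet_form_unique[OF fin gg that] by blast
    then show ?thesis using finite_subset by blast
  qed
  then show ?thesis unfolding eq using finite_facets[OF fin] by blast
qed

inductive_set FF :: "(int ^ 'd \<Rightarrow> complex) set" where
  ff: "(\<lambda>m. ffact_vec m b) \<in> FF"
| add: "f \<in> FF \<Longrightarrow> g \<in> FF \<Longrightarrow> (\<lambda>m. f m + g m) \<in> FF"
| scale: "f \<in> FF \<Longrightarrow> (\<lambda>m. c * f m) \<in> FF"

lemma ffact_vec_0: "ffact_vec m 0 = 1"
  by (simp add: ffact_vec_def)

lemma FF_const: "(\<lambda>m. c) \<in> FF"
proof -
  have "(\<lambda>m. c * ffact_vec m 0) \<in> FF" by (intro FF.scale FF.ff)
  then show ?thesis by (simp add: ffact_vec_0)
qed

lemma FF_sum: "finite I \<Longrightarrow> (\<forall>i\<in>I. h i \<in> FF) \<Longrightarrow> (\<lambda>m. \<Sum>i\<in>I. h i m) \<in> FF"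
proof (induction I rule: finite_induct)
  case empty then show ?case using FF_const[of 0] by simp
next
  case (insert i I)
  then show ?case using FF.add[of "h i" "\<lambda>m. \<Sum>i\<in>I. h i m"] by simp
qed

lemma ffact_vec_step:
  "ffact_vec m b * of_int (m $ i) =
     ffact_vec m (\<chi> j. if j = i then b $ j + 1 else b $ j) + of_nat (b $ i) * ffact_vec m b"
proof -
  define F where "F j n = (\<Prod>k<n. (of_int (m $ j - int k) :: complex))" for j n
  have "ffact_vec m (\<chi> j. if j = i then b $ j + 1 else b $ j)
      = (\<Prod>j\<in>UNIV. F j (b $ j) * (if j = i then of_int (m $ i - int (b $ i)) else 1))"
    unfolding ffact_vec_def F_def by (intro prod.cong) (auto simp: lessThan_Suc)
  also have "\<dots> = ffact_vec m b * of_int (m $ i - int (b $ i))"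
    by (simp add: prod.distrib ffact_vec_def F_def)
  finally show ?thesis by (simp add: algebra_simps)
qed

lemma FF_coord: "f \<in> FF \<Longrightarrow> (\<lambda>m. f m * of_int (m $ i)) \<in> FF"
proof (induction f rule: FF.induct)
  case (ff b)
  have "(\<lambda>m. ffact_vec m (\<chi> j. if j = i then b $ j + 1 else b $ j) + of_nat (b $ i) * ffact_vec m b) \<in> FF"
    by (intro FF.add FF.scale FF.ff)
  then show ?case by (simp add: ffact_vec_step)
next
  case (add f g)
  then show ?case using FF.add[OF add.IH] by (simp add: algebra_simps)
next
  case (scale f c)
  then show ?case using FF.scale[OF scale.IH, of c] by (simp add: algebra_simps)
qed

lemma inner_rl: "w \<bullet> real_of_lattice m = (\<Sum>i\<in>UNIV. w $ i * real_of_int (m $ i))"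
  by (simp add: inner_vec_def real_of_lattice_def)

lemma FF_affine:
  assumes "f \<in> FF"
  shows "(\<lambda>m. f m * complex_of_real (w \<bullet> real_of_lattice m - c)) \<in> FF"
proof -
  have eq: "(\<lambda>m. f m * complex_of_real (w \<bullet> real_of_lattice m - c)) =
     (\<lambda>m. (\<Sum>i\<in>UNIV. complex_of_real (w $ i) * (f m * of_int (m $ i))) + (- complex_of_real c) * f m)"
    by (rule ext) (simp add: inner_rl algebra_simps sum_distrib_left)
  show ?thesis unfolding eq
    by (intro FF.add FF.scale FF_sum ballI FF_coord assms) simp
qed

lemma FF_prod:
  "finite T \<Longrightarrow> (\<lambda>m. \<Prod>(w, c)\<in>T. complex_of_real (w \<bullet> real_of_lattice m - c)) \<in> FF"
proof (induction T rule: finite_induct)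
  case empty then show ?case using FF_const[of 1] by simp
next
  case (insert p T)
  obtain w c where p: "p = (w, c)" by force
  have "(\<lambda>m. (\<Prod>(w, c)\<in>T. complex_of_real (w \<bullet> real_of_lattice m - c)) *
          complex_of_real (w \<bullet> real_of_lattice m - c)) \<in> FF"
    by (rule FF_affine[OF insert.IH])
  then show ?case using insert by (simp add: p mult.commute)
qed

lemma act_superset:
  assumes "finite S" "{p. P p \<noteq> 0} \<subseteq> S"
  shows "act P h n = (\<Sum>p\<in>S. P p * ffact_vec (n + int_of_natvec (snd p) - fst p) (snd p) *
            h (n + int_of_natvec (snd p) - fst p))"
  unfolding act_def by (rule sum.mono_neutral_left[OF assms(1) assms(2)]) auto

lemma FF_op:
  fixes a :: "int ^ 'd"
  assumes "f \<in> FF"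
  shows "\<exists>P\<in>diffops. \<forall>h n. act P h n = f (n + a) * h (n + a)"
  using assms
proof (induction f rule: FF.induct)
  case (ff b)
  define P where "P = (\<lambda>p. if p = (int_of_natvec b - a, b) then (1::complex) else 0)"
  have supp: "{p. P p \<noteq> 0} = {(int_of_natvec b - a, b)}" by (auto simp: P_def)
  have "act P h n = ffact_vec (n + a) b * h (n + a)" for h n
    unfolding act_def supp by (simp add: P_def)
  moreover have "P \<in> diffops" by (simp add: diffops_def supp)
  ultimately show ?case by blast
next
  case (add f g)
  then obtain P Q where P: "P \<in> diffops" "\<forall>h n. act P h n = f (n + a) * h (n + a)"
    and Q: "Q \<in> diffops" "\<forall>h n. act Q h n = g (n + a) * h (n + a)" by blast
  define S where "S = {p. P p \<noteq> 0} \<union> {p. Q p \<noteq> 0}"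
  have fS: "finite S" using P Q by (simp add: S_def diffops_def)
  let ?R = "\<lambda>p. P p + Q p"
  have sR: "{p. ?R p \<noteq> 0} \<subseteq> S" by (auto simp: S_def)
  have "act ?R h n = act P h n + act Q h n" for h n
  proof -
    have sP: "{p. P p \<noteq> 0} \<subseteq> S" and sQ: "{p. Q p \<noteq> 0} \<subseteq> S" by (auto simp: S_def)
    show ?thesis unfolding act_superset[OF fS sR] act_superset[OF fS sP] act_superset[OF fS sQ]
      by (simp add: algebra_simps sum.distrib)
  qed
  moreover have "?R \<in> diffops" using fS sR finite_subset unfolding diffops_def by blast
  ultimately show ?case using P Q by (auto simp: algebra_simps)
next
  case (scale f c)
  then obtain P where P: "P \<in> diffops" "\<forall>h n. act P h n = f (n + a) * h (n + a)" by blast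
  define S where "S = {p. P p \<noteq> 0}"
  have fS: "finite S" using P by (simp add: S_def diffops_def)
  let ?R = "\<lambda>p. c * P p"
  have sR: "{p. ?R p \<noteq> 0} \<subseteq> S" by (auto simp: S_def)
  have "act ?R h n = c * act P h n" for h n
  proof -
    have sP: "{p. P p \<noteq> 0} \<subseteq> S" by (auto simp: S_def)
    show ?thesis unfolding act_superset[OF fS sR] act_superset[OF fS sP]
      by (simp add: sum_distrib_left algebra_simps)
  qed
  moreover have "?R \<in> diffops" using fS sR finite_subset unfolding diffops_def by blast
  ultimately show ?case using P by (auto simp: algebra_simps)
qed

lemma sg_mult:
  assumes "m \<in> semigroup_gen A"
  shows "\<exists>m'\<in>semigroup_gen A. w \<bullet> real_of_lattice m' = of_nat k * (w \<bullet> real_of_lattice m)"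
proof (induction k)
  case 0 then show ?case using semigroup_gen.zero by (force simp: rl_0)
next
  case (Suc k)
  then obtain m' where "m' \<in> semigroup_gen A" "w \<bullet> real_of_lattice m' = of_nat k * (w \<bullet> real_of_lattice m)" by blast
  then show ?case using sg_add[OF assms, of m'] 
    by (intro bexI[of _ "m' + m"]) (auto simp: rl_add inner_add_right algebra_simps)
qed

lemma cofinite_vals:
  fixes A :: "(int ^ 'd) set"
  assumes fin: "finite A" and gg: "group_gen A = UNIV" and ff: "is_facet_form A \<sigma> w"
  shows "\<exists>K::int. \<forall>n::int. n \<ge> K \<longrightarrow> of_int n \<in> (\<lambda>b. w \<bullet> real_of_lattice b) ` semigroup_gen A"
proof -
  have img: "(\<lambda>a. w \<bullet> real_of_lattice a) ` UNIV = \<int>" and nn: "\<forall>x\<in>real_cone A. w \<bullet> x \<ge> 0"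
    using ff unfolding is_facet_form_def by auto
  obtain z where "w \<bullet> real_of_lattice z = 1" using img by (metis Ints_1 imageE)
  moreover obtain x y where xy: "x \<in> semigroup_gen A" "y \<in> semigroup_gen A" "z = x - y"
    using gg_diff[of z A] gg by auto
  ultimately have wx: "w \<bullet> real_of_lattice x = w \<bullet> real_of_lattice y + 1"
    by (simp add: rl_diff inner_diff_right)
  have "w \<bullet> real_of_lattice y \<in> \<int>" using img by blast
  then obtain P where P: "w \<bullet> real_of_lattice y = of_int P" by (metis Ints_cases)
  have "P \<ge> 0" using w_nonneg_sg[OF fin nn xy(2)] P by simp
  show ?thesis
  proof (intro exI[of _ "P * P"] allI impI)
    fix n :: int assume n: "n \<ge> P * P"
    have n0: "n \<ge> 0" using n \<open>P \<ge> 0\<close> by (metis mult_nonneg_nonneg order_trans)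
    show "of_int n \<in> (\<lambda>b. w \<bullet> real_of_lattice b) ` semigroup_gen A"
    proof (cases "P = 0")
      case True
      obtain m where "m \<in> semigroup_gen A" "w \<bullet> real_of_lattice m = of_nat (nat n) * (w \<bullet> real_of_lattice x)"
        using sg_mult[OF xy(1)] by blast
      then show ?thesis using wx P True n0 by (force intro: image_eqI)
    next
      case False
      then have Pp: "P > 0" using \<open>P \<ge> 0\<close> by simp
      define q where "q = n div P"
      define r where "r = n mod P"
      have nqr: "n = q * P + r" by (simp add: q_def r_def)
      have r0: "0 \<le> r" "r < P" using Pp by (auto simp: r_def)
      have "q \<ge> P"
      proof (rule ccontr)
        assume "\<not> P \<le> q"
        then have "q + 1 \<le> P" by simp
        then have "(q + 1) * P \<le> P * P" using Pp by (simp add: mult_right_mono)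
        then show False using nqr r0 n by (simp add: algebra_simps)
      qed
      obtain m1 where m1: "m1 \<in> semigroup_gen A" "w \<bullet> real_of_lattice m1 = of_nat (nat (q - r)) * (w \<bullet> real_of_lattice y)"
        using sg_mult[OF xy(2)] by blast
      obtain m2 where m2: "m2 \<in> semigroup_gen A" "w \<bullet> real_of_lattice m2 = of_nat (nat r) * (w \<bullet> real_of_lattice x)"
        using sg_mult[OF xy(1)] by blast
      have "w \<bullet> real_of_lattice (m1 + m2) = of_int ((q - r) * P + r * (P + 1))"
        using m1(2) m2(2) wx P r0 \<open>q \<ge> P\<close> by (simp add: rl_add inner_add_right)
      also have "(q - r) * P + r * (P + 1) = n" using nqr by (simp add: algebra_simps)
      finally show ?thesis using sg_add[OF m2(1) m1(1)] by (force intro: image_eqI)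
    qed
  qed
qed

lemma delta_span: "a \<in> S \<Longrightarrow> (\<lambda>m. if m = a then c else 0) \<in> span_monomials S"
proof -
  have "{m. (if m = a then c else 0) \<noteq> 0} \<subseteq> {a}" by auto
  then show "a \<in> S \<Longrightarrow> ?thesis" unfolding span_monomials_def laurent_def
    using finite_subset by (auto split: if_splits)
qed

lemma NA_sub_S1: "semigroup_gen A \<subseteq> S1 A"
  unfolding S1_def by blast

lemma NA_graded:
  assumes "semigroup_gen A \<subseteq> S"
  shows "graded_submodule A (span_monomials (semigroup_gen A)) (span_monomials S)"
  unfolding graded_submodule_def
proof (intro conjI ballI allI)
  show "span_monomials (semigroup_gen A) \<subseteq> span_monomials S"
    using assms unfolding span_monomials_def by auto
  show "(\<lambda>_. 0) \<in> span_monomials (semigroup_gen A)"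
    unfolding span_monomials_def laurent_def by simp
next
  fix f g assume f: "f \<in> span_monomials (semigroup_gen A)" and g: "g \<in> span_monomials (semigroup_gen A)"
  have "{m. f m + g m \<noteq> 0} \<subseteq> {m. f m \<noteq> 0} \<union> {m. g m \<noteq> 0}" by auto
  then show "(\<lambda>m. f m + g m) \<in> span_monomials (semigroup_gen A)"
    using f g finite_subset unfolding span_monomials_def laurent_def
    by (auto simp del: Collect_disj_eq)
next
  fix c f assume f: "f \<in> span_monomials (semigroup_gen A)"
  have "{m. c * f m \<noteq> 0} \<subseteq> {m. f m \<noteq> 0}" by auto
  then show "(\<lambda>m. c * f m) \<in> span_monomials (semigroup_gen A)"
    using f finite_subset unfolding span_monomials_def laurent_def by auto
next
  fix P f assume "P \<in> DRA A" "f \<in> span_monomials (semigroup_gen A)"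
  then show "act P f \<in> span_monomials (semigroup_gen A)" unfolding DRA_def by blast
next
  fix f a assume f: "f \<in> span_monomials (semigroup_gen A)"
  show "(\<lambda>m. if m = a then f a else 0) \<in> span_monomials (semigroup_gen A)"
  proof (cases "f a = 0")
    case True then show ?thesis unfolding span_monomials_def laurent_def by simp
  next
    case False
    then have "a \<in> semigroup_gen A" using f unfolding span_monomials_def by blast
    then show ?thesis by (rule delta_span)
  qed
qed

lemma shift_op:
  assumes "b \<in> semigroup_gen A"
  shows "\<exists>Q\<in>DRA A. \<forall>h n. act Q h n = h (n - b)"
proof -
  obtain Q where Q: "Q \<in> diffops" "\<forall>h n. act Q h n = 1 * h (n + - b)"
    using FF_op[OF FF_const[of 1], of "- b"] by blast
  then have Qh: "act Q h = (\<lambda>n. h (n - b))" for h by auto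
  have "Q \<in> DRA A" unfolding DRA_def
  proof (intro CollectI conjI ballI Q(1))
    fix f assume f: "f \<in> span_monomials (semigroup_gen A)"
    have "{n. f (n - b) \<noteq> 0} \<subseteq> (\<lambda>m. m + b) ` {m. f m \<noteq> 0}"
      by (auto intro: image_eqI[of _ _ "_ - b"])
    moreover have "finite {m. f m \<noteq> 0}" using f unfolding span_monomials_def laurent_def by auto
    ultimately have "finite {n. f (n - b) \<noteq> 0}" using finite_subset by blast
    moreover have "n \<in> semigroup_gen A" if "f (n - b) \<noteq> 0" for n
    proof -
      have "n - b \<in> semigroup_gen A" using f that unfolding span_monomials_def by blast
      then show ?thesis using sg_add[OF assms] by fastforce
    qed
    ultimately show "act Q f \<in> span_monomials (semigroup_gen A)"
      unfolding Qh span_monomials_def laurent_def by auto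
  qed
  then show ?thesis using Q(2) by auto
qed

lemma key_op:
  fixes A :: "(int ^ 'd) set"
  assumes fin: "finite A" and gg: "group_gen A = UNIV" and sc: "semigroup_gen A = S1 A"
    and a: "a \<in> semigroup_gen A"
  shows "\<exists>g P. P \<in> DRA A \<and> g a \<noteq> 0 \<and> (\<forall>h n. act P h n = g (n + a) * h (n + a))"
proof -
  define W where "W = {w. \<exists>\<sigma>. \<sigma> facet_of real_cone A \<and> is_facet_form A \<sigma> w}"
  have finW: "finite W" unfolding W_def by (rule finite_W[OF fin gg])
  have "\<forall>w\<in>W. \<exists>K::int. \<forall>n::int. n \<ge> K \<longrightarrow> of_int n \<in> (\<lambda>b. w \<bullet> real_of_lattice b) ` semigroup_gen A"
    unfolding W_def using cofinite_vals[OF fin gg] by blast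
  then have "\<exists>K. \<forall>w\<in>W. \<forall>n::int. n \<ge> K w \<longrightarrow> of_int n \<in> (\<lambda>b. w \<bullet> real_of_lattice b) ` semigroup_gen A"
    by (rule bchoice)
  then obtain K where K0: "\<forall>w\<in>W. \<forall>n::int. n \<ge> K w \<longrightarrow> of_int n \<in> (\<lambda>b. w \<bullet> real_of_lattice b) ` semigroup_gen A"
    by blast
  have K: "\<And>w n. w \<in> W \<Longrightarrow> n \<ge> K w \<Longrightarrow> of_int n \<in> (\<lambda>b. w \<bullet> real_of_lattice b) ` semigroup_gen A"
    using K0 by blast
  define Cs where "Cs w = {c::int. 0 \<le> c \<and> c < K w + \<lceil>w \<bullet> real_of_lattice a\<rceil> \<and> of_int c \<noteq> w \<bullet> real_of_lattice a}" for w
  define T where "T = (\<Union>w\<in>W. (\<lambda>c. (w, real_of_int c)) ` Cs w)"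
  have finCs: "finite (Cs w)" for w
    by (rule finite_subset[of _ "{0..<K w + \<lceil>w \<bullet> real_of_lattice a\<rceil>}"]) (auto simp: Cs_def)
  have finT: "finite T" unfolding T_def using finW finCs by (intro finite_UN_I finite_imageI) auto
  define g where "g m = (\<Prod>(w, c)\<in>T. complex_of_real (w \<bullet> real_of_lattice m - c))" for m
  have gFF: "g \<in> FF" unfolding g_def[abs_def] by (rule FF_prod[OF finT])
  obtain P where P: "P \<in> diffops" "\<forall>h n. act P h n = g (n + a) * h (n + a)"
    using FF_op[OF gFF, of a] by blast
  have nz: "(\<lambda>(w, c). complex_of_real (w \<bullet> real_of_lattice a - c)) p \<noteq> 0" if "p \<in> T" for p
  proof -
    obtain w c where wc: "p = (w, real_of_int c)" "c \<in> Cs w" using \<open>p \<in> T\<close> unfolding T_def by blast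
    then have "w \<bullet> real_of_lattice a - real_of_int c \<noteq> 0" by (simp add: Cs_def)
    then show ?thesis unfolding wc(1) by (simp only: prod.case of_real_eq_0_iff not_False_eq_True)
  qed
  have ga: "g a \<noteq> 0"
    unfolding g_def using nz prod_zero_iff[OF finT] by blast
  have integ: "w \<bullet> real_of_lattice m \<in> \<int>" if "w \<in> W" for w m
    using that unfolding W_def is_facet_form_def by blast
  have vanish: "g m = 0" if m: "m \<in> semigroup_gen A" "m - a \<notin> semigroup_gen A" for m
  proof -
    have "m - a \<notin> S1 A" using m sc by simp
    then obtain \<sigma> w where sw: "\<sigma> facet_of real_cone A" "is_facet_form A \<sigma> w"
      and nimg: "w \<bullet> real_of_lattice (m - a) \<notin> (\<lambda>b. w \<bullet> real_of_lattice b) ` semigroup_gen A"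
      unfolding S1_def by blast
    have wW: "w \<in> W" using sw W_def by blast
    obtain C where C: "w \<bullet> real_of_lattice m = of_int C" using integ[OF wW] by (metis Ints_cases)
    obtain D where D: "w \<bullet> real_of_lattice a = of_int D" using integ[OF wW] by (metis Ints_cases)
    have "C \<ge> 0" using w_nonneg_sg[OF fin _ m(1), of w] sw(2) C unfolding is_facet_form_def by simp
    moreover have "C \<noteq> D"
    proof
      assume "C = D"
      then have "w \<bullet> real_of_lattice (m - a) = w \<bullet> real_of_lattice 0"
        using C D \<open>C = D\<close> by (simp add: rl_diff rl_0 inner_diff_right)
      then show False using nimg semigroup_gen.zero by blast
    qed
    moreover have "C < K w + D"
    proof (rule ccontr)
      assume "\<not> C < K w + D"
      then have "of_int (C - D) \<in> (\<lambda>b. w \<bullet> real_of_lattice b) ` semigroup_gen A" using K[OF wW, of "C - D"] by simp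
      moreover have "w \<bullet> real_of_lattice (m - a) = of_int (C - D)"
        using C D by (simp add: rl_diff inner_diff_right)
      ultimately show False using nimg by simp
    qed
    ultimately have "C \<in> Cs w" using C D by (simp add: Cs_def)
    then have "(w, real_of_int C) \<in> T" unfolding T_def using wW by blast
    moreover have "complex_of_real (w \<bullet> real_of_lattice m - real_of_int C) = 0" using C by simp
    ultimately show ?thesis unfolding g_def
      by (intro prod_zero[OF finT] bexI[of _ "(w, real_of_int C)"]) (simp_all add: C)
  qed
  have Ph: "act P h = (\<lambda>n. g (n + a) * h (n + a))" for h using P(2) by auto
  have "P \<in> DRA A" unfolding DRA_def
  proof (intro CollectI conjI ballI P(1))
    fix f assume f: "f \<in> span_monomials (semigroup_gen A)"
    have "{n. g (n + a) * f (n + a) \<noteq> 0} \<subseteq> (\<lambda>m. m - a) ` {m. f m \<noteq> 0}"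
    proof
      fix n assume "n \<in> {n. g (n + a) * f (n + a) \<noteq> 0}"
      then have "f (n + a) \<noteq> 0" by auto
      then show "n \<in> (\<lambda>m. m - a) ` {m. f m \<noteq> 0}" by (intro image_eqI[of n "\<lambda>m. m - a" "n + a"]) auto
    qed
    moreover have "finite {m. f m \<noteq> 0}" using f unfolding span_monomials_def laurent_def by auto
    ultimately have "finite {n. g (n + a) * f (n + a) \<noteq> 0}" using finite_subset by blast
    moreover have "n \<in> semigroup_gen A" if "g (n + a) * f (n + a) \<noteq> 0" for n
    proof -
      have "n + a \<in> semigroup_gen A" using f that unfolding span_monomials_def by auto
      moreover have "g (n + a) \<noteq> 0" using that by auto
      moreover have "(n + a) - a = n" by simp
      ultimately show ?thesis using vanish[of "n + a"] by metis
    qed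
    ultimately show "act P f \<in> span_monomials (semigroup_gen A)"
      unfolding Ph span_monomials_def laurent_def by auto
  qed
  then show ?thesis using ga P(2) by blast
qed

lemma gs_sub: "graded_submodule A N M \<Longrightarrow> N \<subseteq> M"
  and gs_zero: "graded_submodule A N M \<Longrightarrow> (\<lambda>_. 0) \<in> N"
  and gs_add: "graded_submodule A N M \<Longrightarrow> f \<in> N \<Longrightarrow> g \<in> N \<Longrightarrow> (\<lambda>m. f m + g m) \<in> N"
  and gs_scale: "graded_submodule A N M \<Longrightarrow> f \<in> N \<Longrightarrow> (\<lambda>m. c * f m) \<in> N"
  and gs_act: "graded_submodule A N M \<Longrightarrow> P \<in> DRA A \<Longrightarrow> f \<in> N \<Longrightarrow> act P f \<in> N"
  and gs_hom: "graded_submodule A N M \<Longrightarrow> f \<in> N \<Longrightarrow> (\<lambda>m. if m = a then f a else 0) \<in> N"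
  unfolding graded_submodule_def by blast+

lemma sum_deltas:
  assumes N: "graded_submodule A N M" and F: "finite F" and d: "\<forall>b\<in>F. (\<lambda>n. if n = b then 1 else 0) \<in> N"
  shows "(\<lambda>n. \<Sum>b\<in>F. if n = b then coef b else 0) \<in> N"
  using F d
proof (induction F rule: finite_induct)
  case empty then show ?case using gs_zero[OF N] by simp
next
  case (insert b F)
  have "(\<lambda>m. coef b * (if m = b then 1 else 0)) \<in> N"
    using gs_scale[OF N] insert by simp
  then have "(\<lambda>m. (coef b * (if m = b then 1 else 0)) + (\<Sum>b\<in>F. if m = b then coef b else 0)) \<in> N"
    using gs_add[OF N] insert by simp
  moreover have "(\<lambda>m. (coef b * (if m = b then 1 else 0)) + (\<Sum>b\<in>F. if m = b then coef b else 0))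
     = (\<lambda>n. \<Sum>b\<in>insert b F. if n = b then coef b else 0)"
    using insert by (intro ext) (simp add: sum.insert)
  ultimately show ?case by simp
qed

theorem proposition8p13:
  fixes A :: "(int ^ 'd) set"
  assumes "finite A"
    and "group_gen A = UNIV"
  shows "semigroup_gen A = S1 A \<longleftrightarrow> simple_graded_module A (span_monomials (S1 A))"
proof
  assume sc: "semigroup_gen A = S1 A"
  let ?NA = "semigroup_gen A"
  have d0: "(\<lambda>m. if m = 0 then (1::complex) else 0) \<in> span_monomials ?NA"
    by (rule delta_span[OF semigroup_gen.zero])
  have ne: "span_monomials ?NA \<noteq> {\<lambda>_. 0}"
  proof
    assume "span_monomials ?NA = {\<lambda>_. 0}"
    with d0 have "(\<lambda>m::int^'d. if m = 0 then (1::complex) else 0) \<in> {\<lambda>_. 0}" by simp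
    then have "(\<lambda>m::int^'d. if m = 0 then (1::complex) else 0) = (\<lambda>_. 0)" by (rule singletonD)
    then have "(\<lambda>m::int^'d. if m = 0 then (1::complex) else 0) 0 = (\<lambda>_. 0) 0" by (rule fun_cong)
    then show False by simp
  qed
  show "simple_graded_module A (span_monomials (S1 A))"
    unfolding simple_graded_module_def sc[symmetric]
  proof (intro conjI allI impI ne)
    fix N assume N: "graded_submodule A N (span_monomials ?NA)"
    show "N = {\<lambda>_. 0} \<or> N = span_monomials ?NA"
    proof (cases "N \<subseteq> {\<lambda>_. 0}")
      case True
      then show ?thesis using gs_zero[OF N] by blast
    next
      case False
      then obtain f where f: "f \<in> N" "f \<noteq> (\<lambda>_. 0)" by blast
      then obtain a where fa: "f a \<noteq> 0"
      proof -
        assume r: "\<And>a. f a \<noteq> 0 \<Longrightarrow> thesis"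
        show thesis
        proof (rule ccontr)
          assume "\<not> thesis"
          then have "\<And>a. f a = 0" using r by blast
          then have "f = (\<lambda>_. 0)" by (rule ext)
          then show False using f(2) by contradiction
        qed
      qed
      have "f \<in> span_monomials ?NA" using gs_sub[OF N] f by blast
      then have a: "a \<in> ?NA" using fa unfolding span_monomials_def by blast
      obtain g P where gP: "P \<in> DRA A" "g a \<noteq> 0" "\<forall>h n. act P h n = g (n + a) * h (n + a)"
        using key_op[OF assms sc a] by blast
      have "(\<lambda>m. if m = a then f a else 0) \<in> N" using gs_hom[OF N f(1)] by blast
      then have "act P (\<lambda>m. if m = a then f a else 0) \<in> N"
        using gs_act[OF N gP(1)] by blast
      moreover have "act P (\<lambda>m. if m = a then f a else 0) = (\<lambda>n::int^'d. if n = 0 then g a * f a else 0)"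
      proof
        fix n show "act P (\<lambda>m. if m = a then f a else 0) n = (if n = 0 then g a * f a else 0)"
          by (cases "n = 0") (simp_all add: gP(3))
      qed
      ultimately have "(\<lambda>n::int^'d. if n = 0 then g a * f a else 0) \<in> N" by simp
      then have "(\<lambda>n::int^'d. inverse (g a * f a) * (if n = 0 then g a * f a else 0)) \<in> N"
        using gs_scale[OF N] by blast
      moreover have "(\<lambda>n::int^'d. inverse (g a * f a) * (if n = 0 then g a * f a else 0)) = (\<lambda>n::int^'d. if n = 0 then 1 else 0)"
      proof -
        have "g a * f a \<noteq> 0" using gP(2) fa by simp
        then have "inverse (g a * f a) * (g a * f a) = 1" by (rule left_inverse)
        then show ?thesis by (intro ext) simp
      qed
      ultimately have d0N: "(\<lambda>n::int^'d. if n = 0 then (1::complex) else 0) \<in> N" by simp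
      have dN: "(\<lambda>n. if n = b then (1::complex) else 0) \<in> N" if b: "b \<in> ?NA" for b
      proof -
        obtain Q where Q: "Q \<in> DRA A" "\<forall>h n. act Q h n = h (n - b)" using shift_op[OF b] by blast
        have "act Q (\<lambda>n::int^'d. if n = 0 then (1::complex) else 0) \<in> N"
          using gs_act[OF N Q(1) d0N] by blast
        moreover have "act Q (\<lambda>n::int^'d. if n = 0 then (1::complex) else 0) = (\<lambda>n. if n = b then 1 else 0)"
          by (intro ext) (simp add: Q(2))
        ultimately show ?thesis by simp
      qed
      have "span_monomials ?NA \<subseteq> N"
      proof
        fix h assume h: "h \<in> span_monomials ?NA"
        define F where "F = {m. h m \<noteq> 0}"
        have fF: "finite F" and FNA: "F \<subseteq> ?NA"
          using h unfolding F_def span_monomials_def laurent_def by auto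
        have "(\<lambda>n. \<Sum>b\<in>F. if n = b then h b else 0) \<in> N"
          by (rule sum_deltas[OF N fF]) (use dN FNA in blast)
        moreover have "(\<lambda>n. \<Sum>b\<in>F. if n = b then h b else 0) = h"
        proof
          fix n show "(\<Sum>b\<in>F. if n = b then h b else 0) = h n"
          proof -
            have "(\<Sum>b\<in>F. if n = b then h b else 0) = (if n \<in> F then h n else 0)"
              by (rule sum.delta'[OF fF])
            then show ?thesis by (simp add: F_def)
          qed
        qed
        ultimately show "h \<in> N" by simp
      qed
      then show ?thesis using gs_sub[OF N] by blast
    qed
  qed
next
  assume sim: "simple_graded_module A (span_monomials (S1 A))"
  let ?NA = "semigroup_gen A"
  have gr: "graded_submodule A (span_monomials ?NA) (span_monomials (S1 A))"
    by (rule NA_graded[OF NA_sub_S1])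
  have d0: "(\<lambda>m. if m = 0 then (1::complex) else 0) \<in> span_monomials ?NA"
    by (rule delta_span[OF semigroup_gen.zero])
  have "span_monomials ?NA \<noteq> {\<lambda>_. 0}"
  proof
    assume "span_monomials ?NA = {\<lambda>_. 0}"
    with d0 have "(\<lambda>m::int^'d. if m = 0 then (1::complex) else 0) \<in> {\<lambda>_. 0}" by simp
    then have "(\<lambda>m::int^'d. if m = 0 then (1::complex) else 0) = (\<lambda>_. 0)" by (rule singletonD)
    then have "(\<lambda>m::int^'d. if m = 0 then (1::complex) else 0) 0 = (\<lambda>_. 0) 0" by (rule fun_cong)
    then show False by simp
  qed
  then have eq: "span_monomials ?NA = span_monomials (S1 A)"
  proof -
    have "\<forall>N. graded_submodule A N (span_monomials (S1 A)) \<longrightarrow> N = {\<lambda>_. 0} \<or> N = span_monomials (S1 A)"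
      using sim unfolding simple_graded_module_def by blast
    then show ?thesis using gr \<open>span_monomials ?NA \<noteq> {\<lambda>_. 0}\<close> by blast
  qed
  have "S1 A \<subseteq> ?NA"
  proof
    fix s assume "s \<in> S1 A"
    then have "(\<lambda>m. if m = s then (1::complex) else 0) \<in> span_monomials ?NA"
      using delta_span[OF \<open>s \<in> S1 A\<close>] eq by simp
    then have "\<forall>m. (if m = s then (1::complex) else 0) \<noteq> 0 \<longrightarrow> m \<in> ?NA"
      unfolding span_monomials_def by blast
    then show "s \<in> ?NA" by (drule_tac spec[of _ s]) simp
  qed
  then show "semigroup_gen A = S1 A" using NA_sub_S1 by blast
qed

end
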